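(* Let $G$ be a finite free graph. Then $\phi(G)\le \chi(G)+d(G)$. Moreover, if the girth of $G$ satisfies $g(G)\ge 5$, then $\phi(G)\le \chi(G)+4$.
   Context: An independent set of $G$ is a free independent set if it is contained in at least two distinct maximal independent sets of $G$. $G$ is free if every vertex lies in some free independent set. The free chromatic number $\phi(G)$ is the minimum positive integer $t$ such that $V(G)$ can be partitioned into $t$ free independent sets. For an edge $e=uv$, $d(e)=|N(u)\cup N(v)|$ where $N(\cdot)$ is the (open) neighborhood, and $d(G)=\min\{d(e):e\in E(G)\}$. $g(G)$ is the girth (infinite for forests). *)

theory Defs
  imports Main "HOL-Library.Extended_Nat"
begin

definition simple_graph :: "'a set \<Rightarrow> ('a \<Rightarrow> 'a \<Rightarrow> bool) \<Rightarrow> bool" where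
  "simple_graph V E \<longleftrightarrow> finite V \<and> (\<forall>u v. E u v \<longrightarrow> u \<in> V \<and> v \<in> V)
     \<and> (\<forall>u v. E u v \<longrightarrow> E v u) \<and> (\<forall>v. \<not> E v v)"

definition nbhd :: "'a set \<Rightarrow> ('a \<Rightarrow> 'a \<Rightarrow> bool) \<Rightarrow> 'a \<Rightarrow> 'a set" where
  "nbhd V E v = {u \<in> V. E v u}"

definition indep_set :: "'a set \<Rightarrow> ('a \<Rightarrow> 'a \<Rightarrow> bool) \<Rightarrow> 'a set \<Rightarrow> bool" where
  "indep_set V E S \<longleftrightarrow> S \<subseteq> V \<and> (\<forall>u\<in>S. \<forall>v\<in>S. \<not> E u v)"

definition maximal_indep_set :: "'a set \<Rightarrow> ('a \<Rightarrow> 'a \<Rightarrow> bool) \<Rightarrow> 'a set \<Rightarrow> bool" where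
  "maximal_indep_set V E S \<longleftrightarrow> indep_set V E S \<and> (\<forall>T. indep_set V E T \<and> S \<subseteq> T \<longrightarrow> T = S)"

definition free_indep_set :: "'a set \<Rightarrow> ('a \<Rightarrow> 'a \<Rightarrow> bool) \<Rightarrow> 'a set \<Rightarrow> bool" where
  "free_indep_set V E S \<longleftrightarrow> indep_set V E S \<and>
     (\<exists>M1 M2. maximal_indep_set V E M1 \<and> maximal_indep_set V E M2 \<and> M1 \<noteq> M2 \<and> S \<subseteq> M1 \<and> S \<subseteq> M2)"

definition free_graph :: "'a set \<Rightarrow> ('a \<Rightarrow> 'a \<Rightarrow> bool) \<Rightarrow> bool" where
  "free_graph V E \<longleftrightarrow> (\<forall>v\<in>V. \<exists>S. free_indep_set V E S \<and> v \<in> S)"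

text \<open>Partition of V into t free independent sets, encoded by a labelling c : V -> {..<t};
  the classes are the sets {v in V. c v = i}, i < t.\<close>
definition free_chromatic_number :: "'a set \<Rightarrow> ('a \<Rightarrow> 'a \<Rightarrow> bool) \<Rightarrow> nat" where
  "free_chromatic_number V E = (LEAST t. t > 0 \<and> (\<exists>c. (\<forall>v\<in>V. c v < t) \<and>
       (\<forall>i<t. free_indep_set V E {v \<in> V. c v = i})))"

definition chromatic_number :: "'a set \<Rightarrow> ('a \<Rightarrow> 'a \<Rightarrow> bool) \<Rightarrow> nat" where
  "chromatic_number V E = (LEAST t. \<exists>c. (\<forall>v\<in>V. c v < (t::nat)) \<and>
       (\<forall>u\<in>V. \<forall>v\<in>V. E u v \<longrightarrow> c u \<noteq> c v))"

definition edge_deg :: "'a set \<Rightarrow> ('a \<Rightarrow> 'a \<Rightarrow> bool) \<Rightarrow> 'a \<Rightarrow> 'a \<Rightarrow> nat" where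
  "edge_deg V E u v = card (nbhd V E u \<union> nbhd V E v)"

definition min_edge_deg :: "'a set \<Rightarrow> ('a \<Rightarrow> 'a \<Rightarrow> bool) \<Rightarrow> nat" where
  "min_edge_deg V E = Min {edge_deg V E u v | u v. E u v}"

definition is_cycle :: "'a set \<Rightarrow> ('a \<Rightarrow> 'a \<Rightarrow> bool) \<Rightarrow> 'a list \<Rightarrow> bool" where
  "is_cycle V E cs \<longleftrightarrow> length cs \<ge> 3 \<and> distinct cs \<and> set cs \<subseteq> V \<and>
     (\<forall>i < length cs. E (cs ! i) (cs ! ((i + 1) mod length cs)))"

text \<open>Girth as an extended natural: infinite (Inf of the empty set) for forests.\<close>
definition girth :: "'a set \<Rightarrow> ('a \<Rightarrow> 'a \<Rightarrow> bool) \<Rightarrow> enat" where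
  "girth V E = Inf {enat (length cs) | cs. is_cycle V E cs}"

end

theory Submission
  imports Defs
begin

lemma free_subset:
  assumes "free_indep_set V E T" "S \<subseteq> T"
  shows "free_indep_set V E S"
  using assms unfolding free_indep_set_def indep_set_def by blast

lemma extend_max:
  assumes sg: "simple_graph V E" and "indep_set V E T"
  shows "\<exists>M. maximal_indep_set V E M \<and> T \<subseteq> M"
  using assms(2)
proof (induction "card V - card T" arbitrary: T rule: less_induct)
  case less
  show ?case
  proof (cases "maximal_indep_set V E T")
    case True then show ?thesis by blast
  next
    case False
    then obtain T' where T': "indep_set V E T'" "T \<subseteq> T'" "T' \<noteq> T"
      using less.prems unfolding maximal_indep_set_def by blast
    have fin: "finite V" using sg by (simp add: simple_graph_def)
    have "T' \<subseteq> V" using T' by (simp add: indep_set_def)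
    then have "card T' \<le> card V" using fin card_mono by blast
    moreover have "card T < card T'"
      using T' \<open>T' \<subseteq> V\<close> fin by (metis finite_subset psubsetI psubset_card_mono)
    ultimately have "card V - card T' < card V - card T" by linarith
    from less.hyps[OF this T'(1)] T'(2) show ?thesis by blast
  qed
qed

lemma free_crit:
  assumes sg: "simple_graph V E" and ind: "indep_set V E S"
    and xy: "E x y" "x \<notin> S" "y \<notin> S" "\<forall>s\<in>S. \<not> E s x \<and> \<not> E s y"
  shows "free_indep_set V E S"
proof -
  have sym: "\<And>a b. E a b \<Longrightarrow> E b a" and inV: "\<And>a b. E a b \<Longrightarrow> a \<in> V \<and> b \<in> V"
    and irr: "\<And>a. \<not> E a a"
    using sg by (auto simp: simple_graph_def)
  have i1: "indep_set V E (insert x S)"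
    using ind xy inV[OF xy(1)] sym irr unfolding indep_set_def by blast
  have i2: "indep_set V E (insert y S)"
    using ind xy inV[OF xy(1)] sym irr unfolding indep_set_def by blast
  obtain M1 where M1: "maximal_indep_set V E M1" "insert x S \<subseteq> M1"
    using extend_max[OF sg i1] by blast
  obtain M2 where M2: "maximal_indep_set V E M2" "insert y S \<subseteq> M2"
    using extend_max[OF sg i2] by blast
  have "M1 \<noteq> M2"
  proof
    assume "M1 = M2"
    then have "x \<in> M2" "y \<in> M2" using M1 M2 by auto
    then show False using M2(1) xy(1) unfolding maximal_indep_set_def indep_set_def by blast
  qed
  then show ?thesis using M1 M2 ind unfolding free_indep_set_def by blast
qed

lemma free_crit_conv:
  assumes sg: "simple_graph V E" and fr: "free_indep_set V E S"
  shows "\<exists>x y. E x y \<and> x \<notin> S \<and> y \<notin> S \<and> (\<forall>s\<in>S. \<not> E s x \<and> \<not> E s y)"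
proof -
  have sym: "\<And>a b. E a b \<Longrightarrow> E b a" and inV: "\<And>a b. E a b \<Longrightarrow> a \<in> V \<and> b \<in> V"
    and irr: "\<And>a. \<not> E a a"
    using sg by (auto simp: simple_graph_def)
  obtain M1 M2 where M: "maximal_indep_set V E M1" "maximal_indep_set V E M2" "M1 \<noteq> M2"
    "S \<subseteq> M1" "S \<subseteq> M2"
    using fr unfolding free_indep_set_def by blast
  have I1: "M1 \<subseteq> V" "\<forall>a\<in>M1. \<forall>b\<in>M1. \<not> E a b" and I2: "M2 \<subseteq> V" "\<forall>a\<in>M2. \<forall>b\<in>M2. \<not> E a b"
    and mx1: "\<And>T. indep_set V E T \<Longrightarrow> M1 \<subseteq> T \<Longrightarrow> T = M1"
    and mx2: "\<And>T. indep_set V E T \<Longrightarrow> M2 \<subseteq> T \<Longrightarrow> T = M2"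
    using M(1,2) unfolding maximal_indep_set_def indep_set_def by auto
  have "\<not> M1 \<subseteq> M2"
  proof
    assume "M1 \<subseteq> M2"
    from mx1[OF _ this] M(2,3) show False unfolding maximal_indep_set_def by auto
  qed
  then obtain x where x: "x \<in> M1" "x \<notin> M2" by blast
  have xV: "x \<in> V" using x I1 by blast
  have "\<not> indep_set V E (insert x M2)"
  proof
    assume "indep_set V E (insert x M2)"
    from mx2[OF this] x(2) show False by auto
  qed
  then have "\<exists>y\<in>M2. E x y \<or> E y x"
    using xV irr I2 unfolding indep_set_def by auto
  then obtain y where y: "y \<in> M2" "E x y"
    using sym by blast
  have "x \<notin> S" using x M(5) by blast
  moreover have "y \<notin> S" using y M(4) x(1) I1 by blast
  moreover have "\<forall>s\<in>S. \<not> E s x \<and> \<not> E s y"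
    using M(4,5) x(1) y(1) I1(2) I2(2) by blast
  ultimately show ?thesis using y(2) by blast
qed

lemma free_single:
  assumes "free_graph V E" "w \<in> V"
  shows "free_indep_set V E {w}"
  using assms free_subset unfolding free_graph_def by blast

lemma free_le1:
  assumes "free_graph V E" "S \<subseteq> V" "\<forall>x\<in>S. \<forall>y\<in>S. x = y" "w0 \<in> V"
  shows "free_indep_set V E S"
proof (cases "S = {}")
  case True then show ?thesis using free_subset[OF free_single[OF assms(1,4)]] by simp
next
  case False
  then obtain w where "w \<in> S" by blast
  then have "S = {w}" using assms(3) by blast
  then show ?thesis using free_single[OF assms(1)] assms(2) by auto
qed

lemma chrom_ex:
  assumes sg: "simple_graph V E"
  shows "\<exists>c. (\<forall>v\<in>V. c v < chromatic_number V E) \<and>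
       (\<forall>u\<in>V. \<forall>v\<in>V. E u v \<longrightarrow> c u \<noteq> c v)"
proof -
  have fin: "finite V" using sg by (simp add: simple_graph_def)
  obtain f :: "'a \<Rightarrow> nat" and n where f: "f ` V = {i. i < n}" "inj_on f V"
    using finite_imp_inj_to_nat_seg[OF fin] by blast
  have irr: "\<And>a. \<not> E a a" using sg by (auto simp: simple_graph_def)
  have "\<exists>c. (\<forall>v\<in>V. c v < (n::nat)) \<and> (\<forall>u\<in>V. \<forall>v\<in>V. E u v \<longrightarrow> c u \<noteq> c v)"
    using f irr by (intro exI[of _ f]) (auto simp: inj_on_def)
  then have "\<exists>t. \<exists>c. (\<forall>v\<in>V. c v < (t::nat)) \<and> (\<forall>u\<in>V. \<forall>v\<in>V. E u v \<longrightarrow> c u \<noteq> c v)" by blast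
  then show ?thesis unfolding chromatic_number_def
    by (rule LeastI_ex[where P="\<lambda>t. \<exists>c. (\<forall>v\<in>V. c v < (t::nat)) \<and> (\<forall>u\<in>V. \<forall>v\<in>V. E u v \<longrightarrow> c u \<noteq> c v)"])
qed

lemma assemble:
  assumes sg: "simple_graph V E" and fg: "free_graph V E" and uv: "E u v"
    and c: "\<forall>w\<in>V. c w < chromatic_number V E"
       "\<forall>x\<in>V. \<forall>y\<in>V. E x y \<longrightarrow> c x \<noteq> c y"
    and X: "X = nbhd V E u \<union> nbhd V E v"
    and c1: "\<forall>w\<in>V. c' w < chromatic_number V E + k"
    and c2: "\<forall>w\<in>V - X. c' w = c w"
    and c3: "\<forall>w\<in>V \<inter> X. c' w \<ge> chromatic_number V E"
    and c4: "\<forall>i. chromatic_number V E \<le> i \<longrightarrow> i < chromatic_number V E + k \<longrightarrow>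
              free_indep_set V E {w\<in>V. c' w = i}"
    and kpos: "chromatic_number V E + k > 0"
  shows "free_chromatic_number V E \<le> chromatic_number V E + k"
proof -
  let ?x = "chromatic_number V E"
  have sym: "\<And>a b. E a b \<Longrightarrow> E b a" and inV: "\<And>a b. E a b \<Longrightarrow> a \<in> V \<and> b \<in> V"
    and irr: "\<And>a. \<not> E a a"
    using sg by (auto simp: simple_graph_def)
  have "\<forall>i<?x + k. free_indep_set V E {w \<in> V. c' w = i}"
  proof (intro allI impI)
    fix i assume i: "i < ?x + k"
    show "free_indep_set V E {w \<in> V. c' w = i}"
    proof (cases "?x \<le> i")
      case True then show ?thesis using c4 i by blast
    next
      case False
      have cl: "{w \<in> V. c' w = i} = {w \<in> V - X. c w = i}"
        using c2 c3 False by force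
      show ?thesis unfolding cl
      proof (rule free_crit[OF sg _ uv])
        show "indep_set V E {w \<in> V - X. c w = i}"
          using c(2) unfolding indep_set_def by blast
        show "u \<notin> {w \<in> V - X. c w = i}" "v \<notin> {w \<in> V - X. c w = i}"
          using X uv inV sym by (auto simp: nbhd_def)
        show "\<forall>s\<in>{w \<in> V - X. c w = i}. \<not> E s u \<and> \<not> E s v"
          using X sym by (auto simp: nbhd_def)
      qed
    qed
  qed
  then have "?x + k > 0 \<and> (\<exists>c. (\<forall>v\<in>V. c v < ?x + k) \<and>
       (\<forall>i<?x + k. free_indep_set V E {v \<in> V. c v = i}))"
    using c1 kpos by blast
  then show ?thesis unfolding free_chromatic_number_def by (rule Least_le)
qed


lemma cyc_short:
  assumes "is_cycle V E cs" "girth V E \<ge> 5" "length cs < 5"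
  shows False
proof -
  have "girth V E \<le> enat (length cs)"
    unfolding girth_def using assms(1) by (intro Inf_lower) blast
  with assms(2) have "(5::enat) \<le> enat (length cs)" by (rule order_trans)
  then have "5 \<le> length cs" by (simp add: numeral_eq_enat)
  then show False using assms(3) by simp
qed

lemma no_tri:
  assumes sg: "simple_graph V E" and g: "girth V E \<ge> 5"
    and e: "E a b" "E b c" "E c a"
  shows False
proof -
  have inV: "\<And>x y. E x y \<Longrightarrow> x \<in> V \<and> y \<in> V" and irr: "\<And>x. \<not> E x x"
    using sg by (auto simp: simple_graph_def)
  have d: "a \<noteq> b" "b \<noteq> c" "c \<noteq> a" using e irr by metis+
  have "\<forall>i<3. E ([a,b,c] ! i) ([a,b,c] ! ((i + 1) mod 3))"
  proof (intro allI impI)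
    fix i :: nat assume "i < 3"
    then have "i = 0 \<or> i = 1 \<or> i = 2" by arith
    then show "E ([a,b,c] ! i) ([a,b,c] ! ((i + 1) mod 3))" using e by auto
  qed
  then have "is_cycle V E [a,b,c]"
    unfolding is_cycle_def using d e inV by auto
  from cyc_short[OF this g] show False by simp
qed

lemma no_sq:
  assumes sg: "simple_graph V E" and g: "girth V E \<ge> 5"
    and e: "E a b" "E b c" "E c d" "E d a" and dist: "distinct [a,b,c,d]"
  shows False
proof -
  have inV: "\<And>x y. E x y \<Longrightarrow> x \<in> V \<and> y \<in> V"
    using sg by (auto simp: simple_graph_def)
  have "\<forall>i<4. E ([a,b,c,d] ! i) ([a,b,c,d] ! ((i + 1) mod 4))"
  proof (intro allI impI)
    fix i :: nat assume "i < 4"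
    then have "i = 0 \<or> i = 1 \<or> i = 2 \<or> i = 3" by arith
    then show "E ([a,b,c,d] ! i) ([a,b,c,d] ! ((i + 1) mod 4))" using e by auto
  qed
  then have "is_cycle V E [a,b,c,d]"
    unfolding is_cycle_def using dist e inV by auto
  from cyc_short[OF this g] show False by simp
qed

lemma A_free1:
  assumes sg: "simple_graph V E" and g: "girth V E \<ge> 5"
    and e: "E u v" "E v b" "b \<noteq> u"
  shows "free_indep_set V E {a\<in>V. E u a \<and> a \<noteq> v}"
proof -
  have sym: "\<And>a b. E a b \<Longrightarrow> E b a" and inV: "\<And>a b. E a b \<Longrightarrow> a \<in> V \<and> b \<in> V"
    and irr: "\<And>a. \<not> E a a"
    using sg by (auto simp: simple_graph_def)
  show ?thesis
  proof (rule free_crit[OF sg _ e(2)])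
    show "indep_set V E {a \<in> V. E u a \<and> a \<noteq> v}"
      unfolding indep_set_def using no_tri[OF sg g] sym by blast
    show "v \<notin> {a \<in> V. E u a \<and> a \<noteq> v}" by simp
    show "b \<notin> {a \<in> V. E u a \<and> a \<noteq> v}"
      using no_tri[OF sg g e(1,2)] sym by blast
    show "\<forall>s\<in>{a \<in> V. E u a \<and> a \<noteq> v}. \<not> E s v \<and> \<not> E s b"
    proof
      fix s assume s: "s \<in> {a \<in> V. E u a \<and> a \<noteq> v}"
      have "\<not> E s v" using no_tri[OF sg g, of u s v] s e(1) sym by blast
      moreover have "\<not> E s b"
      proof
        assume sb: "E s b"
        have "distinct [u,s,b,v]" using s e irr sb by auto
        then show False using no_sq[OF sg g, of u s b v] s sb e sym by blast
      qed
      ultimately show "\<not> E s v \<and> \<not> E s b" by blast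
    qed
  qed
qed

lemma A_free2:
  assumes sg: "simple_graph V E" and fg: "free_graph V E"
    and e: "E u v" and leaf: "\<forall>a. E u a \<longrightarrow> a \<noteq> v \<longrightarrow> (\<forall>w. E a w \<longrightarrow> w = u)"
  shows "free_indep_set V E {a\<in>V. E u a \<and> a \<noteq> v}"
proof -
  have sym: "\<And>a b. E a b \<Longrightarrow> E b a" and inV: "\<And>a b. E a b \<Longrightarrow> a \<in> V \<and> b \<in> V"
    and irr: "\<And>a. \<not> E a a"
    using sg by (auto simp: simple_graph_def)
  have "free_indep_set V E {u}" using free_single[OF fg] inV[OF e] by blast
  from free_crit_conv[OF sg this] obtain x y where
    xy: "E x y" "x \<noteq> u" "y \<noteq> u" "\<not> E u x" "\<not> E u y" by blast
  show ?thesis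
  proof (rule free_crit[OF sg _ xy(1)])
    show "indep_set V E {a \<in> V. E u a \<and> a \<noteq> v}"
      unfolding indep_set_def using leaf irr by blast
    show "x \<notin> {a \<in> V. E u a \<and> a \<noteq> v}" "y \<notin> {a \<in> V. E u a \<and> a \<noteq> v}"
      using xy by auto
    show "\<forall>s\<in>{a \<in> V. E u a \<and> a \<noteq> v}. \<not> E s x \<and> \<not> E s y"
      using leaf xy by blast
  qed
qed

lemma has_edge:
  assumes sg: "simple_graph V E" and fg: "free_graph V E" and ne: "V \<noteq> {}"
  shows "\<exists>u v. E u v"
proof -
  obtain w where "w \<in> V" using ne by blast
  from free_crit_conv[OF sg free_single[OF fg this]] show ?thesis by blast
qed

lemma good_edge:
  assumes sg: "simple_graph V E" and fg: "free_graph V E" and ne: "V \<noteq> {}"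
    and g: "girth V E \<ge> 5"
  shows "\<exists>u v. E u v \<and> free_indep_set V E {a\<in>V. E u a \<and> a \<noteq> v}
                    \<and> free_indep_set V E {b\<in>V. E v b \<and> b \<noteq> u}"
proof -
  have sym: "\<And>a b. E a b \<Longrightarrow> E b a" and inV: "\<And>a b. E a b \<Longrightarrow> a \<in> V \<and> b \<in> V"
    and irr: "\<And>a. \<not> E a a"
    using sg by (auto simp: simple_graph_def)
  show ?thesis
  proof (cases "\<exists>u v a b. E u v \<and> E u a \<and> a \<noteq> v \<and> E v b \<and> b \<noteq> u")
    case True
    then obtain u v a b where h: "E u v" "E u a" "a \<noteq> v" "E v b" "b \<noteq> u" by blast
    have "free_indep_set V E {a\<in>V. E u a \<and> a \<noteq> v}" using A_free1[OF sg g h(1,4,5)] .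
    moreover have "free_indep_set V E {b\<in>V. E v b \<and> b \<noteq> u}"
      using A_free1[OF sg g sym[OF h(1)] h(2,3)] .
    ultimately show ?thesis using h(1) by blast
  next
    case False
    have leafcase: "\<exists>u v. E u v \<and> free_indep_set V E {a\<in>V. E u a \<and> a \<noteq> v}
                    \<and> free_indep_set V E {b\<in>V. E v b \<and> b \<noteq> u}"
      if pq: "E p q" "\<forall>b. E q b \<longrightarrow> b = p" for p q
    proof -
      have "free_indep_set V E {a\<in>V. E p a \<and> a \<noteq> q}"
      proof (rule A_free2[OF sg fg pq(1)], intro allI impI)
        fix a w assume "E p a" "a \<noteq> q" "E a w"
        then show "w = p" using False pq(1) by blast
      qed
      moreover have "free_indep_set V E {b\<in>V. E q b \<and> b \<noteq> p}"
        by (rule free_le1[OF fg _ _ conjunct1[OF inV[OF pq(1)]]]) (use pq(2) in auto)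
      ultimately show ?thesis using pq(1) by blast
    qed
    obtain u0 v0 where e0: "E u0 v0" using has_edge[OF sg fg ne] by blast
    show ?thesis
    proof (cases "\<forall>b. E v0 b \<longrightarrow> b = u0")
      case True then show ?thesis using leafcase[OF e0] by blast
    next
      case F2: False
      then have "\<forall>b. E u0 b \<longrightarrow> b = v0" using False e0 by blast
      then show ?thesis using leafcase[OF sym[OF e0]] by blast
    qed
  qed
qed


lemma part1:
  assumes sg: "simple_graph V E" and ne: "V \<noteq> {}" and fg: "free_graph V E"
  shows "free_chromatic_number V E \<le> chromatic_number V E + min_edge_deg V E"
proof -
  have sym: "\<And>a b. E a b \<Longrightarrow> E b a" and inV: "\<And>a b. E a b \<Longrightarrow> a \<in> V \<and> b \<in> V"
    and irr: "\<And>a. \<not> E a a" and fin: "finite V"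
    using sg by (auto simp: simple_graph_def)
  let ?D = "{edge_deg V E u v | u v. E u v}"
  have "?D \<subseteq> (\<lambda>(u,v). edge_deg V E u v) ` (V \<times> V)"
  proof
    fix x assume "x \<in> ?D"
    then obtain u v where "x = edge_deg V E u v" "E u v" by blast
    then show "x \<in> (\<lambda>(u,v). edge_deg V E u v) ` (V \<times> V)"
      using inV[of u v] by (intro image_eqI[of _ _ "(u,v)"]) auto
  qed
  then have finD: "finite ?D"
    using finite_subset finite_imageI[OF finite_cartesian_product[OF fin fin]] by blast
  have "?D \<noteq> {}" using has_edge[OF sg fg ne] by blast
  then have "min_edge_deg V E \<in> ?D" unfolding min_edge_deg_def using finD Min_in by blast
  then obtain u v where uv: "E u v" and md: "min_edge_deg V E = edge_deg V E u v" by blast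
  define X where "X = nbhd V E u \<union> nbhd V E v"
  have XV: "X \<subseteq> V" unfolding X_def nbhd_def by auto
  then have finX: "finite X" using fin finite_subset by blast
  obtain g :: "'a \<Rightarrow> nat" and n where g: "g ` X = {i. i < n}" "inj_on g X"
    using finite_imp_inj_to_nat_seg[OF finX] by blast
  have "card X = n" using g card_image[OF g(2)] by simp
  then have nd: "n = min_edge_deg V E" using md unfolding edge_deg_def X_def by simp
  obtain c where c: "\<forall>w\<in>V. c w < chromatic_number V E"
       "\<forall>x\<in>V. \<forall>y\<in>V. E x y \<longrightarrow> c x \<noteq> c y" using chrom_ex[OF sg] by blast
  define c' where "c' w = (if w \<in> X then chromatic_number V E + g w else c w)" for w
  have uX: "u \<in> X" unfolding X_def nbhd_def using uv inV sym by auto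
  have gl: "\<And>w. w \<in> X \<Longrightarrow> g w < n" using g by blast
  show ?thesis unfolding nd[symmetric]
  proof (rule assemble[OF sg fg uv c X_def])
    show "\<forall>w\<in>V. c' w < chromatic_number V E + n"
      using c gl unfolding c'_def by (simp add: trans_less_add1)
    show "\<forall>w\<in>V - X. c' w = c w" unfolding c'_def by simp
    show "\<forall>w\<in>V \<inter> X. chromatic_number V E \<le> c' w" unfolding c'_def by simp
    show "0 < chromatic_number V E + n" using gl[OF uX] by simp
    show "\<forall>i. chromatic_number V E \<le> i \<longrightarrow> i < chromatic_number V E + n \<longrightarrow>
              free_indep_set V E {w\<in>V. c' w = i}"
    proof (intro allI impI)
      fix i assume i: "chromatic_number V E \<le> i"
      have one: "\<forall>x\<in>{w\<in>V. c' w = i}. \<forall>y\<in>{w\<in>V. c' w = i}. x = y"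
      proof (intro ballI)
        fix x y assume x: "x \<in> {w\<in>V. c' w = i}" and y: "y \<in> {w\<in>V. c' w = i}"
        have "x \<in> X"
        proof (rule ccontr)
          assume "x \<notin> X"
          then have "c x = i" using x unfolding c'_def by simp
          then show False using x i c by force
        qed
        moreover have "y \<in> X"
        proof (rule ccontr)
          assume "y \<notin> X"
          then have "c y = i" using y unfolding c'_def by simp
          then show False using y i c by force
        qed
        ultimately have "g x = g y" using x y unfolding c'_def by simp
        then show "x = y" using g(2) \<open>x \<in> X\<close> \<open>y \<in> X\<close> unfolding inj_on_def by blast
      qed
      have sub: "{w\<in>V. c' w = i} \<subseteq> V" by blast
      show "free_indep_set V E {w\<in>V. c' w = i}"
        using free_le1[OF fg sub one conjunct1[OF inV[OF uv]]] .
    qed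
  qed
qed

lemma part2:
  assumes sg: "simple_graph V E" and ne: "V \<noteq> {}" and fg: "free_graph V E"
    and gi: "girth V E \<ge> 5"
  shows "free_chromatic_number V E \<le> chromatic_number V E + 4"
proof -
  have sym: "\<And>a b. E a b \<Longrightarrow> E b a" and inV: "\<And>a b. E a b \<Longrightarrow> a \<in> V \<and> b \<in> V"
    and irr: "\<And>a. \<not> E a a" and fin: "finite V"
    using sg by (auto simp: simple_graph_def)
  obtain u v where uv: "E u v" and fA: "free_indep_set V E {a\<in>V. E u a \<and> a \<noteq> v}"
    and fB: "free_indep_set V E {b\<in>V. E v b \<and> b \<noteq> u}"
    using good_edge[OF sg fg ne gi] by blast
  define A where "A = {a\<in>V. E u a \<and> a \<noteq> v}"
  define B where "B = {b\<in>V. E v b \<and> b \<noteq> u}"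
  define X where "X = nbhd V E u \<union> nbhd V E v"
  obtain c where c: "\<forall>w\<in>V. c w < chromatic_number V E"
       "\<forall>x\<in>V. \<forall>y\<in>V. E x y \<longrightarrow> c x \<noteq> c y" using chrom_ex[OF sg] by blast
  define c' where "c' w = (if w = u then chromatic_number V E else if w = v then chromatic_number V E + 1 else if w \<in> A then chromatic_number V E + 2
      else if w \<in> B then chromatic_number V E + 3 else c w)" for w
  have fu: "free_indep_set V E {u}" "free_indep_set V E {v}"
    using free_single[OF fg] inV[OF uv] by auto
  show ?thesis
  proof (rule assemble[OF sg fg uv c X_def])
    show "\<forall>w\<in>V. c' w < chromatic_number V E + 4"
      using c unfolding c'_def by (simp add: trans_less_add1)
    show "\<forall>w\<in>V - X. c' w = c w"
      unfolding c'_def X_def A_def B_def nbhd_def using uv sym[OF uv] by auto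
    show "\<forall>w\<in>V \<inter> X. chromatic_number V E \<le> c' w"
      unfolding c'_def X_def A_def B_def nbhd_def by auto
    show "0 < chromatic_number V E + 4" by simp
    show "\<forall>i. chromatic_number V E \<le> i \<longrightarrow> i < chromatic_number V E + 4 \<longrightarrow> free_indep_set V E {w\<in>V. c' w = i}"
    proof (intro allI impI)
      fix i assume i: "chromatic_number V E \<le> i" "i < chromatic_number V E + 4"
      have ck: "\<forall>w\<in>V. c w < chromatic_number V E" using c by simp
      then have "i = chromatic_number V E \<or> i = chromatic_number V E + 1 \<or> i = chromatic_number V E + 2 \<or> i = chromatic_number V E + 3" using i by arith
      moreover have "{w\<in>V. c' w = chromatic_number V E} \<subseteq> {u}" using ck unfolding c'_def by auto
      moreover have "{w\<in>V. c' w = chromatic_number V E + 1} \<subseteq> {v}" using ck unfolding c'_def by auto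
      moreover have "{w\<in>V. c' w = chromatic_number V E + 2} \<subseteq> A" using ck unfolding c'_def by auto
      moreover have "{w\<in>V. c' w = chromatic_number V E + 3} \<subseteq> B" using ck unfolding c'_def by auto
      ultimately show "free_indep_set V E {w\<in>V. c' w = i}"
        using free_subset[OF fu(1)] free_subset[OF fu(2)]
          free_subset[OF fA[folded A_def]] free_subset[OF fB[folded B_def]] by auto
    qed
  qed
qed

theorem mainTheorem4:
  fixes V :: "'a set" and E :: "'a \<Rightarrow> 'a \<Rightarrow> bool"
  assumes "simple_graph V E" and "V \<noteq> {}" and "free_graph V E"
  shows "free_chromatic_number V E \<le> chromatic_number V E + min_edge_deg V E
    \<and> (girth V E \<ge> 5 \<longrightarrow> free_chromatic_number V E \<le> chromatic_number V E + 4)"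
  using part1[OF assms] part2[OF assms] by blast

end
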